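(* Let $p\ge 1$, let $(X,Y)$ be random with $Y\in\{0,1\}$, let $f:\mathcal{X}\to[0,1]$ be any model and let $\mathcal{B}=\{I_1,\dots,I_B\}$ be any binning scheme. Then $\ell_p\text{-CE}(f_{\mathcal{B}})\le \ell_p\text{-CE}(f)$.
   Context: For $h:\mathcal{X}\to[0,1]$, $\ell_p\text{-CE}(h)=\big(\mathbb{E}\big[|h(X)-\mathbb{E}[Y\mid h(X)]|^p\big]\big)^{1/p}$. A binning scheme of size $B$ is a set of $B$ intervals $I_1,\dots,I_B$ partitioning $[0,1]$; for $z\in[0,1]$, $\beta(z)$ is the index $j$ with $z\in I_j$. The binned model is $f_{\mathcal{B}}(x)=\mathbb{E}\big[f(X)\mid f(X)\in I_{\beta(f(x))}\big]$. *)

theory Defs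
  imports "HOL-Probability.Probability"
begin

definition condexp_given :: "'a measure \<Rightarrow> ('a \<Rightarrow> 'x) \<Rightarrow> ('a \<Rightarrow> real) \<Rightarrow> ('x \<Rightarrow> real) \<Rightarrow> 'a \<Rightarrow> real" where
  "condexp_given M X Y h = real_cond_exp M (vimage_algebra (space M) (\<lambda>\<omega>. h (X \<omega>)) borel) Y"

definition lp_CE :: "'a measure \<Rightarrow> ('a \<Rightarrow> 'x) \<Rightarrow> ('a \<Rightarrow> real) \<Rightarrow> real \<Rightarrow> ('x \<Rightarrow> real) \<Rightarrow> real" where
  "lp_CE M X Y p h =
     (\<integral>\<omega>. \<bar>h (X \<omega>) - condexp_given M X Y h \<omega>\<bar> powr p \<partial>M) powr (1 / p)"

definition binning_scheme :: "nat \<Rightarrow> (nat \<Rightarrow> real set) \<Rightarrow> bool" where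
  "binning_scheme B I \<longleftrightarrow>
     (\<forall>j<B. is_interval (I j)) \<and>
     (\<forall>j<B. \<forall>k<B. j \<noteq> k \<longrightarrow> I j \<inter> I k = {}) \<and>
     (\<Union>j<B. I j) = {0..1}"

definition bin_index :: "nat \<Rightarrow> (nat \<Rightarrow> real set) \<Rightarrow> real \<Rightarrow> nat" where
  "bin_index B I z = (THE j. j < B \<and> z \<in> I j)"

definition binned_model :: "'a measure \<Rightarrow> ('a \<Rightarrow> 'x) \<Rightarrow> ('x \<Rightarrow> real) \<Rightarrow> nat \<Rightarrow> (nat \<Rightarrow> real set) \<Rightarrow> 'x \<Rightarrow> real" where
  "binned_model M X f B I x =
     (let E = {\<omega> \<in> space M. f (X \<omega>) \<in> I (bin_index B I (f x))}
      in (\<integral>\<omega>. f (X \<omega>) * indicator E \<omega> \<partial>M) / measure M E)"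

end

theory Submission
  imports Defs
begin

lemma pow_convex0:
  fixes a b t p :: real
  assumes "p \<ge> 1" "a \<ge> 0" "b \<ge> 0" "0 < t" "t < 1"
  shows "((1-t)*a + t*b) powr p \<le> (1-t) * a powr p + t * b powr p"
proof (cases "a = 0")
  case True
  have "(t*b) powr p = t powr p * b powr p" using assms by (simp add: powr_mult)
  also have "t powr p \<le> t powr 1" using assms by (intro powr_mono') auto
  then have "t powr p * b powr p \<le> t * b powr p" using assms by (intro mult_right_mono) auto
  finally show ?thesis using True assms by simp
next
  case a: False
  show ?thesis
  proof (cases "b = 0")
    case True
    have "((1-t)*a) powr p = (1-t) powr p * a powr p" using assms by (simp add: powr_mult)
    also have "(1-t) powr p \<le> (1-t) powr 1" using assms by (intro powr_mono') auto
    then have "(1-t) powr p * a powr p \<le> (1-t) * a powr p" using assms by (intro mult_right_mono) auto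
    finally show ?thesis using True assms by simp
  next
    case False
    have "a \<in> {0<..}" "b \<in> {0<..}" using a False assms by auto
    from convex_onD[OF powr_convex[OF assms(1)], of t a b, OF _ _ this] assms
    show ?thesis by simp
  qed
qed

lemma abs_powr_convex:
  fixes p :: real assumes "p \<ge> 1"
  shows "convex_on UNIV (\<lambda>x. \<bar>x\<bar> powr p)"
proof (rule convex_onI)
  fix t x y :: real assume t: "0 < t" "t < 1"
  have "\<bar>(1-t)*x + t*y\<bar> \<le> (1-t)*\<bar>x\<bar> + t*\<bar>y\<bar>"
    using abs_triangle_ineq[of "(1-t)*x" "t*y"] t by (simp add: abs_mult)
  then have "\<bar>(1-t)*x + t*y\<bar> powr p \<le> ((1-t)*\<bar>x\<bar> + t*\<bar>y\<bar>) powr p"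
    using assms by (intro powr_mono2) auto
  also have "\<dots> \<le> (1-t) * \<bar>x\<bar> powr p + t * \<bar>y\<bar> powr p"
    using pow_convex0[OF assms, of "\<bar>x\<bar>" "\<bar>y\<bar>" t] t by auto
  finally show "\<bar>(1 - t) *\<^sub>R x + t *\<^sub>R y\<bar> powr p \<le> (1 - t) * \<bar>x\<bar> powr p + t * \<bar>y\<bar> powr p" by simp
qed simp


lemma bin_props:
  assumes "binning_scheme B I" "z \<in> {0..1}"
  shows "bin_index B I z < B \<and> z \<in> I (bin_index B I z)"
proof -
  have disj: "\<And>j k. j < B \<Longrightarrow> k < B \<Longrightarrow> j \<noteq> k \<Longrightarrow> I j \<inter> I k = {}"
    and cover: "(\<Union>j<B. I j) = {0..1}"
    using assms(1) unfolding binning_scheme_def by auto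
  have "z \<in> (\<Union>j<B. I j)" using assms(2) cover by simp
  then obtain j0 where j0: "j0 < B" "z \<in> I j0" by blast
  have uniq: "j = j0" if "j < B \<and> z \<in> I j" for j
  proof (rule ccontr)
    assume "j \<noteq> j0"
    then have "I j \<inter> I j0 = {}" using disj that j0 by blast
    then show False using that j0 by blast
  qed
  have "bin_index B I z = j0" unfolding bin_index_def
    by (rule the_equality[OF _ uniq]) (use j0 in simp_all)
  then show ?thesis using j0 by simp
qed

lemma bin_iff:
  assumes "binning_scheme B I" "z \<in> {0..1}" "j < B"
  shows "bin_index B I z = j \<longleftrightarrow> z \<in> I j"
proof
  assume "bin_index B I z = j" then show "z \<in> I j" using bin_props[OF assms(1,2)] by simp
next
  assume zj: "z \<in> I j"
  have disj: "\<And>j k. j < B \<Longrightarrow> k < B \<Longrightarrow> j \<noteq> k \<Longrightarrow> I j \<inter> I k = {}"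
    using assms(1) unfolding binning_scheme_def by auto
  show "bin_index B I z = j"
  proof (rule ccontr)
    assume ne: "bin_index B I z \<noteq> j"
    have "I (bin_index B I z) \<inter> I j = {}" using disj[OF _ assms(3) ne] bin_props[OF assms(1,2)] by simp
    moreover have "z \<in> I (bin_index B I z)" using bin_props[OF assms(1,2)] by simp
    ultimately show False using zj by auto
  qed
qed

lemma sum_ind_single:
  fixes c :: "nat \<Rightarrow> real"
  assumes "finite J" "\<And>j. j \<in> J \<Longrightarrow> (x \<in> E j \<longleftrightarrow> j = k)"
  shows "(\<Sum>j\<in>J. c j * indicator (E j) x) = (if k \<in> J then c k else 0)"
proof -
  have "(\<Sum>j\<in>J. c j * indicator (E j) x) = (\<Sum>j\<in>J. if j = k then c j else 0)"
  proof (rule sum.cong)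
    fix j assume "j \<in> J"
    then show "c j * indicator (E j) x = (if j = k then c j else 0)"
      using assms(2)[of j] by (simp add: indicator_def)
  qed simp
  also have "\<dots> = (if k \<in> J then c k else 0)" using assms(1) by (simp add: sum.delta)
  finally show ?thesis .
qed
theorem mainTheorem3:
  fixes M :: "'a measure" and S :: "'x measure"
    and X :: "'a \<Rightarrow> 'x" and Y :: "'a \<Rightarrow> real" and f :: "'x \<Rightarrow> real"
    and p :: real and B :: nat and I :: "nat \<Rightarrow> real set"
  assumes "prob_space M"
    and "X \<in> measurable M S"
    and "Y \<in> borel_measurable M"
    and "\<And>\<omega>. \<omega> \<in> space M \<Longrightarrow> Y \<omega> \<in> {0, 1}"
    and "f \<in> borel_measurable S"
    and "\<And>x. x \<in> space S \<Longrightarrow> f x \<in> {0..1}"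
    and "p \<ge> 1"
    and "binning_scheme B I"
  shows "lp_CE M X Y p (binned_model M X f B I) \<le> lp_CE M X Y p f"
proof -
  interpret P: prob_space M by fact
  have Ym[measurable]: "Y \<in> borel_measurable M" by fact
  define fX where "fX = (\<lambda>\<omega>. f (X \<omega>))"
  define g where "g = binned_model M X f B I"
  define gX where "gX = (\<lambda>\<omega>. g (X \<omega>))"
  define E where "E = (\<lambda>j. {\<omega> \<in> space M. fX \<omega> \<in> I j})"
  define c where "c = (\<lambda>j. (\<integral>\<omega>. fX \<omega> * indicator (E j) \<omega> \<partial>M) / measure M (E j))"
  define Ff where "Ff = vimage_algebra (space M) fX borel"
  define Fg where "Fg = vimage_algebra (space M) gX borel"
  have fXm[measurable]: "fX \<in> borel_measurable M"
    unfolding fX_def using measurable_compose[OF assms(2) assms(5)] by simp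
  have fX01: "fX \<omega> \<in> {0..1}" if "\<omega> \<in> space M" for \<omega>
    unfolding fX_def using measurable_space[OF assms(2) that] assms(6) by blast
  have intv: "\<And>j. j < B \<Longrightarrow> is_interval (I j)"
    using assms(8) unfolding binning_scheme_def by auto
  have Ib: "I j \<in> sets borel" if "j < B" for j
    using real_interval_borel_measurable[OF intv[OF that]] .
  have binlt: "bin_index B I z < B \<and> z \<in> I (bin_index B I z)" if "z \<in> {0..1}" for z
    using bin_props[OF assms(8) that] .
  have bin: "bin_index B I z = j \<longleftrightarrow> z \<in> I j" if "z \<in> {0..1}" "j < B" for z j
    using bin_iff[OF assms(8) that] .
  have Em: "E j \<in> sets M" if "j < B" for j
  proof -
    have "E j = fX -` I j \<inter> space M" unfolding E_def by auto
    then show ?thesis using measurable_sets[OF fXm Ib[OF that]] by simp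
  qed
  have g_eq: "g x = c (bin_index B I (f x))" for x
    unfolding g_def binned_model_def c_def E_def fX_def Let_def by simp
  have inE: "\<omega> \<in> E j \<longleftrightarrow> j = bin_index B I (fX \<omega>)" if "\<omega> \<in> space M" "j < B" for \<omega> j
    using bin[OF fX01[OF that(1)] that(2)] that(1) unfolding E_def by auto
  have gX_sum: "gX \<omega> = (\<Sum>j<B. c j * indicator (E j) \<omega>)" if "\<omega> \<in> space M" for \<omega>
  proof -
    let ?k = "bin_index B I (fX \<omega>)"
    have k: "?k < B" using binlt[OF fX01[OF that]] by simp
    have pre: "\<And>j. j \<in> {..<B} \<Longrightarrow> (\<omega> \<in> E j \<longleftrightarrow> j = ?k)" using inE[OF that] by simp
    have "(\<Sum>j<B. c j * indicator (E j) \<omega>) = c ?k"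
      using sum_ind_single[of "{..<B}" \<omega> E ?k c, OF _ pre] k by simp
    then show ?thesis unfolding gX_def g_eq fX_def by simp
  qed
  have gX_psi: "gX \<omega> = (\<Sum>j<B. c j * indicator (I j) (fX \<omega>))" if "\<omega> \<in> space M" for \<omega>
    unfolding gX_sum[OF that] using that by (intro sum.cong) (auto simp: E_def indicator_def)
  have gXm[measurable]: "gX \<in> borel_measurable M"
  proof -
    have "(\<lambda>\<omega>. \<Sum>j<B. c j * indicator (E j) \<omega>) \<in> borel_measurable M"
      using Em by (intro borel_measurable_sum borel_measurable_times borel_measurable_const borel_measurable_indicator) auto
    moreover have "gX \<in> borel_measurable M \<longleftrightarrow> (\<lambda>\<omega>. \<Sum>j<B. c j * indicator (E j) \<omega>) \<in> borel_measurable M"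
      by (rule measurable_cong) (rule gX_sum)
    ultimately show ?thesis by simp
  qed
  have fXFf: "fX \<in> borel_measurable Ff" unfolding Ff_def
    by (rule measurable_vimage_algebra1) auto
  have gXFf: "gX \<in> borel_measurable Ff"
  proof -
    have psi: "(\<lambda>z. \<Sum>j<B. c j * indicator (I j) z) \<in> borel_measurable borel"
      using Ib by (intro borel_measurable_sum borel_measurable_times borel_measurable_const borel_measurable_indicator) auto
    have "(\<lambda>\<omega>. \<Sum>j<B. c j * indicator (I j) (fX \<omega>)) \<in> borel_measurable Ff"
      using measurable_compose[OF fXFf psi] by simp
    moreover have "gX \<in> borel_measurable Ff \<longleftrightarrow> (\<lambda>\<omega>. \<Sum>j<B. c j * indicator (I j) (fX \<omega>)) \<in> borel_measurable Ff"
      by (rule measurable_cong) (simp add: Ff_def gX_psi)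
    ultimately show ?thesis by simp
  qed
  have gXFg: "gX \<in> borel_measurable Fg" unfolding Fg_def
    by (rule measurable_vimage_algebra1) auto
  have sFf: "sets Ff \<subseteq> sets M" unfolding Ff_def
    by (rule sets_image_in_sets) (auto intro: fXm)
  have sFg: "sets Fg \<subseteq> sets Ff" unfolding Fg_def
    by (rule sets_image_in_sets[OF _ gXFf]) (simp add: Ff_def)
  have subMFf: "subalgebra M Ff" using sFf unfolding subalgebra_def Ff_def by simp
  have subMFg: "subalgebra M Fg" using sFf sFg unfolding subalgebra_def Ff_def Fg_def by simp
  have subFfFg: "subalgebra Ff Fg" using sFg unfolding subalgebra_def Ff_def Fg_def by simp
  have "finite_measure_subalgebra M Ff"
    by (intro finite_measure_subalgebra.intro finite_measure_subalgebra_axioms.intro P.finite_measure_axioms subMFf)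
  then interpret Ff: finite_measure_subalgebra M Ff .
  have "finite_measure_subalgebra M Fg"
    by (intro finite_measure_subalgebra.intro finite_measure_subalgebra_axioms.intro P.finite_measure_axioms subMFg)
  then interpret Fg: finite_measure_subalgebra M Fg .
  define cf where "cf = real_cond_exp M Ff Y"
  define cg where "cg = real_cond_exp M Fg Y"
  have Y01: "0 \<le> Y \<omega> \<and> Y \<omega> \<le> 1" if "\<omega> \<in> space M" for \<omega>
    using assms(4)[OF that] by auto
  have Yint: "integrable M Y"
    by (intro P.integrable_const_bound[where B=1] AE_I2) (use Y01 in auto)
  have fXint: "integrable M fX"
    by (intro P.integrable_const_bound[where B=1] AE_I2) (use fX01 in auto)
  have gXint: "integrable M gX"
  proof (rule P.integrable_const_bound[where B="\<Sum>j<B. \<bar>c j\<bar>"])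
    show "AE x in M. norm (gX x) \<le> (\<Sum>j<B. \<bar>c j\<bar>)"
    proof (rule AE_I2)
      fix \<omega> assume w: "\<omega> \<in> space M"
      have "\<bar>\<Sum>j<B. c j * indicator (E j) \<omega>\<bar> \<le> (\<Sum>j<B. \<bar>c j * indicator (E j) \<omega>\<bar>)"
        by (rule sum_abs)
      also have "\<dots> \<le> (\<Sum>j<B. \<bar>c j\<bar>)"
        by (intro sum_mono) (auto simp: indicator_def)
      finally show "norm (gX \<omega>) \<le> (\<Sum>j<B. \<bar>c j\<bar>)" using gX_sum[OF w] by simp
    qed
  qed simp
  have cf01: "AE \<omega> in M. 0 \<le> cf \<omega> \<and> cf \<omega> \<le> 1"
  proof -
    have "AE \<omega> in M. 0 \<le> cf \<omega>" unfolding cf_def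
      by (intro Ff.real_cond_exp_ge_c Yint AE_I2) (use Y01 in auto)
    moreover have "AE \<omega> in M. cf \<omega> \<le> 1" unfolding cf_def
      by (intro Ff.real_cond_exp_le_c Yint AE_I2) (use Y01 in auto)
    ultimately show ?thesis by auto
  qed
  define Z where "Z = (\<lambda>\<omega>. fX \<omega> - cf \<omega>)"
  define q where "q = (\<lambda>x::real. \<bar>x\<bar> powr p)"
  have cfint: "integrable M cf" unfolding cf_def using Ff.real_cond_exp_int(1)[OF Yint] .
  have Zint: "integrable M Z" unfolding Z_def using Bochner_Integration.integrable_diff[OF fXint cfint] .
  have cfm[measurable]: "cf \<in> borel_measurable M" unfolding cf_def by simp
  have cgm[measurable]: "cg \<in> borel_measurable M" unfolding cg_def by simp
  have qZint: "integrable M (\<lambda>\<omega>. q (Z \<omega>))"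
  proof (rule P.integrable_const_bound[where B=1])
    show "AE x in M. norm (q (Z x)) \<le> 1"
      using cf01 AE_space
    proof (eventually_elim)
      case (elim \<omega>)
      then have "\<bar>Z \<omega>\<bar> \<le> 1" using fX01[of \<omega>] unfolding Z_def by auto
      then show ?case unfolding q_def using assms(7) by (auto intro: powr_le1)
    qed
  qed (unfold q_def Z_def, measurable)
  have qconv: "convex_on UNIV q" unfolding q_def using abs_powr_convex[OF assms(7)] .
  have qm: "q \<in> borel_measurable borel" unfolding q_def by measurable
  have jen: "AE \<omega> in M. q (real_cond_exp M Fg Z \<omega>) \<le> real_cond_exp M Fg (\<lambda>x. q (Z x)) \<omega>"
    using Fg.real_cond_exp_jensens_inequality(2)[OF Zint _ _ qZint qconv qm] by auto
  have qEint: "integrable M (\<lambda>\<omega>. q (real_cond_exp M Fg Z \<omega>))"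
    using Fg.integrable_convex_cond_exp[OF Zint _ _ qZint qconv qm] by auto
  have condf: "AE \<omega> in M. real_cond_exp M Fg fX \<omega> = gX \<omega>"
  proof (rule Fg.real_cond_exp_charact[OF _ fXint gXint gXFg])
    fix A assume A: "A \<in> sets Fg"
    then obtain C where C: "C \<in> sets borel" "A = gX -` C \<inter> space M"
      unfolding Fg_def by (subst (asm) sets_vimage_algebra2) auto
    define J where "J = {j. j < B \<and> c j \<in> C}"
    have J: "finite J" "J \<subseteq> {..<B}" unfolding J_def by auto
    have indA: "indicator A \<omega> = (\<Sum>j\<in>J. indicator (E j) \<omega> :: real)" if w: "\<omega> \<in> space M" for \<omega> :: 'a
    proof -
      let ?k = "bin_index B I (fX \<omega>)"
      have k: "?k < B" using binlt[OF fX01[OF w]] by simp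
      have gk: "gX \<omega> = c ?k" unfolding gX_def g_eq fX_def by simp
      have pre: "\<And>j. j \<in> J \<Longrightarrow> (\<omega> \<in> E j \<longleftrightarrow> j = ?k)" using inE[OF w] J by auto
      have "(\<Sum>j\<in>J. indicator (E j) \<omega>) = (\<Sum>j\<in>J. (\<lambda>_. 1::real) j * indicator (E j) \<omega>)" by simp
      also have "\<dots> = (if ?k \<in> J then 1 else 0)" by (rule sum_ind_single[OF J(1) pre])
      also have "\<dots> = indicator A \<omega>" using k gk w C(2) unfolding J_def by (auto simp: indicator_def)
      finally show ?thesis by simp
    qed
    have pieces: "(\<integral>\<omega>. indicator (E j) \<omega> * fX \<omega> \<partial>M) = (\<integral>\<omega>. indicator (E j) \<omega> * gX \<omega> \<partial>M)"
      if j: "j < B" for j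
    proof -
      have "(\<integral>\<omega>. indicator (E j) \<omega> * gX \<omega> \<partial>M) = (\<integral>\<omega>. c j * indicator (E j) \<omega> \<partial>M)"
      proof (rule Bochner_Integration.integral_cong[OF refl])
        fix \<omega> assume w: "\<omega> \<in> space M"
        show "indicator (E j) \<omega> * gX \<omega> = c j * indicator (E j) \<omega>"
          using inE[OF w j] unfolding gX_def g_eq fX_def by (auto simp: indicator_def)
      qed
      also have "\<dots> = c j * measure M (E j)" using Em[OF j] by simp
      finally have R: "(\<integral>\<omega>. indicator (E j) \<omega> * gX \<omega> \<partial>M) = c j * measure M (E j)" .
      show ?thesis
      proof (cases "measure M (E j) = 0")
        case True
        have "E j \<in> null_sets M" using True Em[OF j] by (simp add: P.emeasure_eq_measure null_setsI)
        then have "AE \<omega> in M. \<omega> \<notin> E j" by (rule AE_not_in)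
        then have "AE \<omega> in M. indicator (E j) \<omega> * fX \<omega> = 0" by eventually_elim auto
        then have "(\<integral>\<omega>. indicator (E j) \<omega> * fX \<omega> \<partial>M) = 0" by (rule integral_eq_zero_AE)
        then show ?thesis using R True by simp
      next
        case False
        have "(\<integral>\<omega>. indicator (E j) \<omega> * fX \<omega> \<partial>M) = c j * measure M (E j)"
          using False unfolding c_def by (simp add: mult.commute)
        then show ?thesis using R by simp
      qed
    qed
    have split: "\<And>h :: 'a \<Rightarrow> real. integrable M h \<Longrightarrow> (\<integral>\<omega>\<in>A. h \<omega> \<partial>M) = (\<Sum>j\<in>J. \<integral>\<omega>. indicator (E j) \<omega> * h \<omega> \<partial>M)"
    proof -
      fix h :: "'a \<Rightarrow> real" assume h: "integrable M h"
      have "(\<integral>\<omega>\<in>A. h \<omega> \<partial>M) = (\<integral>\<omega>. (\<Sum>j\<in>J. indicator (E j) \<omega> * h \<omega>) \<partial>M)"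
        unfolding set_lebesgue_integral_def
        by (intro Bochner_Integration.integral_cong refl) (auto simp: indA sum_distrib_right)
      also have "\<dots> = (\<Sum>j\<in>J. \<integral>\<omega>. indicator (E j) \<omega> * h \<omega> \<partial>M)"
      proof (rule Bochner_Integration.integral_sum)
        fix j assume "j \<in> J"
        then have "E j \<in> sets M" using J Em by auto
        then show "integrable M (\<lambda>x. indicator (E j) x * h x)" using integrable_real_mult_indicator[OF _ h] by (simp add: mult.commute)
      qed
      finally show "(\<integral>\<omega>\<in>A. h \<omega> \<partial>M) = (\<Sum>j\<in>J. \<integral>\<omega>. indicator (E j) \<omega> * h \<omega> \<partial>M)" .
    qed
    have eqs: "(\<Sum>j\<in>J. \<integral>\<omega>. indicator (E j) \<omega> * fX \<omega> \<partial>M) = (\<Sum>j\<in>J. \<integral>\<omega>. indicator (E j) \<omega> * gX \<omega> \<partial>M)"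
      using J pieces by (intro sum.cong) auto
    show "(\<integral>\<omega>\<in>A. fX \<omega> \<partial>M) = (\<integral>\<omega>\<in>A. gX \<omega> \<partial>M)"
      unfolding split[OF fXint] split[OF gXint] using eqs .
  qed
  have tower: "AE \<omega> in M. real_cond_exp M Fg cf \<omega> = cg \<omega>"
    unfolding cf_def cg_def by (rule Fg.real_cond_exp_nested_subalg[OF subMFf subFfFg Yint])
  have diffZ: "AE \<omega> in M. real_cond_exp M Fg Z \<omega> = real_cond_exp M Fg fX \<omega> - real_cond_exp M Fg cf \<omega>"
    unfolding Z_def by (rule Fg.real_cond_exp_diff[OF fXint cfint])
  have eqAE: "AE \<omega> in M. \<bar>gX \<omega> - cg \<omega>\<bar> powr p = q (real_cond_exp M Fg Z \<omega>)"
    using condf tower diffZ by eventually_elim (simp add: q_def)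
  have "(\<integral>\<omega>. \<bar>gX \<omega> - cg \<omega>\<bar> powr p \<partial>M) = (\<integral>\<omega>. q (real_cond_exp M Fg Z \<omega>) \<partial>M)"
    by (rule integral_cong_AE[OF _ borel_measurable_integrable[OF qEint] eqAE]) measurable
  also have "\<dots> \<le> (\<integral>\<omega>. real_cond_exp M Fg (\<lambda>x. q (Z x)) \<omega> \<partial>M)"
    by (rule integral_mono_AE[OF qEint Fg.real_cond_exp_int(1)[OF qZint] jen])
  also have "\<dots> = (\<integral>\<omega>. q (Z \<omega>) \<partial>M)" using Fg.real_cond_exp_int(2)[OF qZint] .
  finally have key: "(\<integral>\<omega>. \<bar>gX \<omega> - cg \<omega>\<bar> powr p \<partial>M) \<le> (\<integral>\<omega>. \<bar>fX \<omega> - cf \<omega>\<bar> powr p \<partial>M)"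
    unfolding q_def Z_def .
  have "(\<integral>\<omega>. \<bar>gX \<omega> - cg \<omega>\<bar> powr p \<partial>M) powr (1/p) \<le> (\<integral>\<omega>. \<bar>fX \<omega> - cf \<omega>\<bar> powr p \<partial>M) powr (1/p)"
  proof (rule powr_mono2)
    show "0 \<le> 1 / p" using assms(7) by simp
    show "0 \<le> (\<integral>\<omega>. \<bar>gX \<omega> - cg \<omega>\<bar> powr p \<partial>M)" by (rule Bochner_Integration.integral_nonneg) simp
  qed (rule key)
  then show ?thesis
    unfolding lp_CE_def condexp_given_def gX_def g_def fX_def cg_def cf_def Fg_def Ff_def .
qed

end
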